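(* Let $(L,\le,\bot,\top)$ be a complete lattice and $(\&_i,\swarrow^i,\nwarrow_i)$, $i=1,\dots,n$, adjoint triples on $L$ such that $x\,\&_i\,\top=\top\,\&_i\,x=x$ for all $x\in L$ and all $i$. Let $(A,B,R,\sigma)$ be a normalized context and $\mathcal{M}$ its concept lattice. Then: (1) $\langle g_\top,f_\bot\rangle\in\mathcal{M}$ and $\langle g_\bot,f_\top\rangle\in\mathcal{M}$; (2) for all $a\in A$, $b\in B$ and $x,y\in L\setminus\{\bot\}$, neither $\langle\phi_{a,x}^\downarrow,\phi_{a,x}^{\downarrow\uparrow}\rangle$ nor $\langle\phi_{b,y}^{\uparrow\downarrow},\phi_{b,y}^{\uparrow}\rangle$ belongs to $\{\langle g_\top,f_\bot\rangle,\langle g_\bot,f_\top\rangle\}$.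
   Context: An adjoint triple on $L$ is a triple of maps $\&,\swarrow,\nwarrow\colon L\times L\to L$ with $x\le z\swarrow y\iff x\& y\le z\iff y\le z\nwarrow x$ for all $x,y,z\in L$. A context is $(A,B,R,\sigma)$ with $A,B$ non-empty sets, $R\colon A\times B\to L$, $\sigma\colon A\times B\to\{1,\dots,n\}$; it is normalized if for every $a\in A$ there are $b_1,b_2\in B$ with $R(a,b_1)\ne\bot$, $R(a,b_2)=\bot$, and for every $b\in B$ there are $a_1,a_2\in A$ with $R(a_1,b)\neq\bot$, $R(a_2,b)=\bot$. For $g\colon B\to L$, $f\colon A\to L$: $g^\uparrow(a)=\inf_{b\in B}R(a,b)\swarrow^{\sigma(a,b)}g(b)$ and $f^\downarrow(b)=\inf_{a\in A}R(a,b)\nwarrow_{\sigma(a,b)}f(a)$. The concept lattice $\mathcal{M}$ is the set of pairs $\langle g,f\rangle$ with $g^\uparrow=f$, $f^\downarrow=g$, ordered by $\langle g_1,f_1\rangle\preceq\langle g_2,f_2\rangle$ iff $g_1\le g_2$ pointwise. $g_\top,g_\bot\colon B\to L$ and $f_\top,f_\bot\colon A\to L$ denote the constant maps with values $\top$, $\bot$. The fuzzy-attribute $\phi_{a,x}\colon A\to L$ takes value $x$ at $a$ and $\bot$ elsewhere; the fuzzy-object $\phi_{b,y}\colon B\to L$ takes value $y$ at $b$ and $\bot$ elsewhere. *)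

theory Defs
  imports Main "HOL-Library.FuncSet"
begin

text \<open>Adjoint triple: x \<le> z \<swarrow> y iff x & y \<le> z iff y \<le> z \<nwarrow> x.
  Here sw z y stands for z \<swarrow> y and nw z x for z \<nwarrow> x.\<close>
definition adjoint_triple ::
  "('l::complete_lattice \<Rightarrow> 'l \<Rightarrow> 'l) \<Rightarrow> ('l \<Rightarrow> 'l \<Rightarrow> 'l) \<Rightarrow> ('l \<Rightarrow> 'l \<Rightarrow> 'l) \<Rightarrow> bool" where
  "adjoint_triple tnorm sw nw \<longleftrightarrow>
     (\<forall>x y z. (x \<le> sw z y \<longleftrightarrow> tnorm x y \<le> z) \<and> (tnorm x y \<le> z \<longleftrightarrow> y \<le> nw z x))"

definition normalized_context ::
  "'a set \<Rightarrow> 'b set \<Rightarrow> ('a \<Rightarrow> 'b \<Rightarrow> 'l::complete_lattice) \<Rightarrow> bool" where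
  "normalized_context A B R \<longleftrightarrow>
     (\<forall>a\<in>A. (\<exists>b1\<in>B. R a b1 \<noteq> bot) \<and> (\<exists>b2\<in>B. R a b2 = bot)) \<and>
     (\<forall>b\<in>B. (\<exists>a1\<in>A. R a1 b \<noteq> bot) \<and> (\<exists>a2\<in>A. R a2 b = bot))"

text \<open>Fuzzy subsets are represented as extensional functions on A resp. B.\<close>
definition up_map ::
  "'a set \<Rightarrow> 'b set \<Rightarrow> ('a \<Rightarrow> 'b \<Rightarrow> 'l::complete_lattice) \<Rightarrow> ('a \<Rightarrow> 'b \<Rightarrow> nat)
   \<Rightarrow> (nat \<Rightarrow> 'l \<Rightarrow> 'l \<Rightarrow> 'l) \<Rightarrow> ('b \<Rightarrow> 'l) \<Rightarrow> ('a \<Rightarrow> 'l)" where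
  "up_map A B R \<sigma> sw g = restrict (\<lambda>a. INF b\<in>B. sw (\<sigma> a b) (R a b) (g b)) A"

definition down_map ::
  "'a set \<Rightarrow> 'b set \<Rightarrow> ('a \<Rightarrow> 'b \<Rightarrow> 'l::complete_lattice) \<Rightarrow> ('a \<Rightarrow> 'b \<Rightarrow> nat)
   \<Rightarrow> (nat \<Rightarrow> 'l \<Rightarrow> 'l \<Rightarrow> 'l) \<Rightarrow> ('a \<Rightarrow> 'l) \<Rightarrow> ('b \<Rightarrow> 'l)" where
  "down_map A B R \<sigma> nw f = restrict (\<lambda>b. INF a\<in>A. nw (\<sigma> a b) (R a b) (f a)) B"

definition concept_lattice ::
  "'a set \<Rightarrow> 'b set \<Rightarrow> ('a \<Rightarrow> 'b \<Rightarrow> 'l::complete_lattice) \<Rightarrow> ('a \<Rightarrow> 'b \<Rightarrow> nat)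
   \<Rightarrow> (nat \<Rightarrow> 'l \<Rightarrow> 'l \<Rightarrow> 'l) \<Rightarrow> (nat \<Rightarrow> 'l \<Rightarrow> 'l \<Rightarrow> 'l) \<Rightarrow> (('b \<Rightarrow> 'l) \<times> ('a \<Rightarrow> 'l)) set" where
  "concept_lattice A B R \<sigma> sw nw =
     {(g, f). g \<in> extensional B \<and> f \<in> extensional A \<and>
              up_map A B R \<sigma> sw g = f \<and> down_map A B R \<sigma> nw f = g}"

definition const_map :: "'x set \<Rightarrow> 'l \<Rightarrow> ('x \<Rightarrow> 'l)" where
  "const_map X c = restrict (\<lambda>_. c) X"

definition phi :: "'x set \<Rightarrow> 'x \<Rightarrow> 'l::complete_lattice \<Rightarrow> ('x \<Rightarrow> 'l)" where
  "phi X u x = restrict (\<lambda>v. if v = u then x else bot) X"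

end

theory Submission
  imports Defs
begin

lemma at_mono1:
  assumes "adjoint_triple t s w" "x \<le> x'" shows "t x y \<le> t x' y"
proof -
  have "x' \<le> s (t x' y) y" using assms(1) unfolding adjoint_triple_def by blast
  then have "x \<le> s (t x' y) y" using assms(2) by (rule order_trans[rotated])
  then show ?thesis using assms(1) unfolding adjoint_triple_def by blast
qed

lemma at_mono2:
  assumes "adjoint_triple t s w" "y \<le> y'" shows "t x y \<le> t x y'"
proof -
  have "y' \<le> w (t x y') x" using assms(1) unfolding adjoint_triple_def by blast
  then have "y \<le> w (t x y') x" using assms(2) by (rule order_trans[rotated])
  then show ?thesis using assms(1) unfolding adjoint_triple_def by blast
qed

lemma at_sw_bot:
  assumes "adjoint_triple t s w" shows "s z bot = top"
proof -
  have "t top bot \<le> z" using assms unfolding adjoint_triple_def by simp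
  then have "top \<le> s z bot" using assms unfolding adjoint_triple_def by blast
  then show ?thesis by (simp add: top_unique)
qed

lemma at_nw_bot:
  assumes "adjoint_triple t s w" shows "w z bot = top"
proof -
  have "t bot top \<le> z" using assms unfolding adjoint_triple_def by (metis bot_least)
  then have "top \<le> w z bot" using assms unfolding adjoint_triple_def by blast
  then show ?thesis by (simp add: top_unique)
qed

lemma at_sw_ge:
  assumes "adjoint_triple t s w" "\<forall>x. t x top = x \<and> t top x = x" shows "r \<le> s r y"
proof -
  have "t r y \<le> t r top" by (rule at_mono2[OF assms(1)]) simp
  then have "t r y \<le> r" using assms(2) by simp
  then show ?thesis using assms(1) unfolding adjoint_triple_def by blast
qed

lemma at_nw_ge:
  assumes "adjoint_triple t s w" "\<forall>x. t x top = x \<and> t top x = x" shows "r \<le> w r x"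
proof -
  have "t x r \<le> t top r" by (rule at_mono1[OF assms(1)]) simp
  then have "t x r \<le> r" using assms(2) by simp
  then show ?thesis using assms(1) unfolding adjoint_triple_def by blast
qed

lemma at_sw_top:
  assumes "adjoint_triple t s w" "\<forall>x. t x top = x \<and> t top x = x" "s r y = top" shows "y \<le> r"
proof -
  have "top \<le> s r y" using assms(3) by simp
  then have "t top y \<le> r" using assms(1) unfolding adjoint_triple_def by blast
  then show ?thesis using assms(2) by simp
qed

lemma at_nw_top:
  assumes "adjoint_triple t s w" "\<forall>x. t x top = x \<and> t top x = x" "w r x = top" shows "x \<le> r"
proof -
  have "top \<le> w r x" using assms(3) by simp
  then have "t x top \<le> r" using assms(1) unfolding adjoint_triple_def by blast
  then show ?thesis using assms(2) by simp
qed

lemma at_sw_topval: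
  assumes "adjoint_triple t s w" "\<forall>x. t x top = x \<and> t top x = x" shows "s r top = r"
proof (rule antisym)
  have "s r top \<le> s r top" by simp
  then have "t (s r top) top \<le> r" using assms(1) unfolding adjoint_triple_def by blast
  then show "s r top \<le> r" using assms(2) by simp
  show "r \<le> s r top" by (rule at_sw_ge[OF assms])
qed

lemma at_nw_topval:
  assumes "adjoint_triple t s w" "\<forall>x. t x top = x \<and> t top x = x" shows "w r top = r"
proof (rule antisym)
  have "w r top \<le> w r top" by simp
  then have "t top (w r top) \<le> r" using assms(1) unfolding adjoint_triple_def by blast
  then show "w r top \<le> r" using assms(2) by simp
  show "r \<le> w r top" by (rule at_nw_ge[OF assms])
qed

theorem proposition26:
  fixes n :: nat
    and tnorm sw nw :: "nat \<Rightarrow> 'l::complete_lattice \<Rightarrow> 'l \<Rightarrow> 'l"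
    and A :: "'a set" and B :: "'b set"
    and R :: "'a \<Rightarrow> 'b \<Rightarrow> 'l" and \<sigma> :: "'a \<Rightarrow> 'b \<Rightarrow> nat"
  assumes adj: "\<forall>i\<in>{1..n}. adjoint_triple (tnorm i) (sw i) (nw i)"
    and units: "\<forall>i\<in>{1..n}. \<forall>x. tnorm i x top = x \<and> tnorm i top x = x"
    and A_ne: "A \<noteq> {}" and B_ne: "B \<noteq> {}"
    and sigma: "\<forall>a\<in>A. \<forall>b\<in>B. \<sigma> a b \<in> {1..n}"
    and norm: "normalized_context A B R"
  shows "(const_map B top, const_map A bot) \<in> concept_lattice A B R \<sigma> sw nw \<and>
         (const_map B bot, const_map A top) \<in> concept_lattice A B R \<sigma> sw nw \<and>
         (\<forall>a\<in>A. \<forall>x. x \<noteq> bot \<longrightarrow>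
            (down_map A B R \<sigma> nw (phi A a x),
             up_map A B R \<sigma> sw (down_map A B R \<sigma> nw (phi A a x)))
            \<notin> {(const_map B top, const_map A bot), (const_map B bot, const_map A top)}) \<and>
         (\<forall>b\<in>B. \<forall>y. y \<noteq> bot \<longrightarrow>
            (down_map A B R \<sigma> nw (up_map A B R \<sigma> sw (phi B b y)),
             up_map A B R \<sigma> sw (phi B b y))
            \<notin> {(const_map B top, const_map A bot), (const_map B bot, const_map A top)})"
proof -
  have AT: "\<And>a b. a \<in> A \<Longrightarrow> b \<in> B \<Longrightarrow> adjoint_triple (tnorm (\<sigma> a b)) (sw (\<sigma> a b)) (nw (\<sigma> a b))"
    using adj sigma by blast
  have UN: "\<And>a b. a \<in> A \<Longrightarrow> b \<in> B \<Longrightarrow> \<forall>x. tnorm (\<sigma> a b) x top = x \<and> tnorm (\<sigma> a b) top x = x"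
    using units sigma by blast
  note nb = at_nw_bot[OF AT] and sb = at_sw_bot[OF AT]
  note nt = at_nw_topval[OF AT UN] and st = at_sw_topval[OF AT UN]
  have up_top: "up_map A B R \<sigma> sw (const_map B top) = const_map A bot"
  proof
    fix a show "up_map A B R \<sigma> sw (const_map B top) a = const_map A bot a"
    proof (cases "a \<in> A")
      case True
      then obtain b2 where "b2 \<in> B" "R a b2 = bot" using norm unfolding normalized_context_def by blast
      have "(INF b\<in>B. sw (\<sigma> a b) (R a b) (const_map B top b)) \<le> sw (\<sigma> a b2) (R a b2) (const_map B top b2)"
        by (rule INF_lower) fact
      also have "\<dots> = bot" using True \<open>b2 \<in> B\<close> \<open>R a b2 = bot\<close> st by (simp add: const_map_def)
      finally have "(INF b\<in>B. sw (\<sigma> a b) (R a b) (const_map B top b)) = bot" by (rule bot_unique[THEN iffD1])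
      then show ?thesis using True by (simp add: up_map_def const_map_def)
    qed (simp add: up_map_def const_map_def)
  qed
  have down_bot: "down_map A B R \<sigma> nw (const_map A bot) = const_map B top"
    by (rule ext) (simp add: down_map_def const_map_def nb)
  have up_bot: "up_map A B R \<sigma> sw (const_map B bot) = const_map A top"
    by (rule ext) (simp add: up_map_def const_map_def sb)
  have down_top: "down_map A B R \<sigma> nw (const_map A top) = const_map B bot"
  proof
    fix b show "down_map A B R \<sigma> nw (const_map A top) b = const_map B bot b"
    proof (cases "b \<in> B")
      case True
      then obtain a2 where "a2 \<in> A" "R a2 b = bot" using norm unfolding normalized_context_def by blast
      have "(INF a\<in>A. nw (\<sigma> a b) (R a b) (const_map A top a)) \<le> nw (\<sigma> a2 b) (R a2 b) (const_map A top a2)"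
        by (rule INF_lower) fact
      also have "\<dots> = bot" using True \<open>a2 \<in> A\<close> \<open>R a2 b = bot\<close> nt by (simp add: const_map_def)
      finally have "(INF a\<in>A. nw (\<sigma> a b) (R a b) (const_map A top a)) = bot" by (rule bot_unique[THEN iffD1])
      then show ?thesis using True by (simp add: down_map_def const_map_def)
    qed (simp add: down_map_def const_map_def)
  qed
  have ext1: "const_map X c \<in> extensional X" for X :: "'x set" and c :: 'l
    by (simp add: const_map_def)
  have part1: "(const_map B top, const_map A bot) \<in> concept_lattice A B R \<sigma> sw nw"
    using up_top down_bot by (simp add: concept_lattice_def ext1)
  have part2: "(const_map B bot, const_map A top) \<in> concept_lattice A B R \<sigma> sw nw"
    using up_bot down_top by (simp add: concept_lattice_def ext1)
  have dphi: "down_map A B R \<sigma> nw (phi A a x) b = nw (\<sigma> a b) (R a b) x"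
    if "a \<in> A" "b \<in> B" for a b x
  proof -
    have "(INF a'\<in>A. nw (\<sigma> a' b) (R a' b) (phi A a x a')) = nw (\<sigma> a b) (R a b) x"
    proof (rule antisym)
      show "(INF a'\<in>A. nw (\<sigma> a' b) (R a' b) (phi A a x a')) \<le> nw (\<sigma> a b) (R a b) x"
        using INF_lower[OF that(1), of "\<lambda>a'. nw (\<sigma> a' b) (R a' b) (phi A a x a')"] that
        by (simp add: phi_def)
      show "nw (\<sigma> a b) (R a b) x \<le> (INF a'\<in>A. nw (\<sigma> a' b) (R a' b) (phi A a x a'))"
        by (rule INF_greatest) (simp add: phi_def nb that)
    qed
    then show ?thesis using that by (simp add: down_map_def)
  qed
  have uphi: "up_map A B R \<sigma> sw (phi B b y) a = sw (\<sigma> a b) (R a b) y"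
    if "a \<in> A" "b \<in> B" for a b y
  proof -
    have "(INF b'\<in>B. sw (\<sigma> a b') (R a b') (phi B b y b')) = sw (\<sigma> a b) (R a b) y"
    proof (rule antisym)
      show "(INF b'\<in>B. sw (\<sigma> a b') (R a b') (phi B b y b')) \<le> sw (\<sigma> a b) (R a b) y"
        using INF_lower[OF that(2), of "\<lambda>b'. sw (\<sigma> a b') (R a b') (phi B b y b')"] that
        by (simp add: phi_def)
      show "sw (\<sigma> a b) (R a b) y \<le> (INF b'\<in>B. sw (\<sigma> a b') (R a b') (phi B b y b'))"
        by (rule INF_greatest) (simp add: phi_def sb that)
    qed
    then show ?thesis using that by (simp add: up_map_def)
  qed
  have part3: "(down_map A B R \<sigma> nw (phi A a x),
             up_map A B R \<sigma> sw (down_map A B R \<sigma> nw (phi A a x)))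
            \<notin> {(const_map B top, const_map A bot), (const_map B bot, const_map A top)}"
    if "a \<in> A" "x \<noteq> bot" for a x
  proof -
    have nA: "(\<exists>b1\<in>B. R a b1 \<noteq> bot) \<and> (\<exists>b2\<in>B. R a b2 = bot)"
      using norm that(1) unfolding normalized_context_def by simp
    obtain b1 where b1: "b1 \<in> B" "R a b1 \<noteq> bot" using nA by auto
    obtain b2 where b2: "b2 \<in> B" "R a b2 = bot" using nA by auto
    have "down_map A B R \<sigma> nw (phi A a x) b2 \<noteq> top"
    proof
      assume "down_map A B R \<sigma> nw (phi A a x) b2 = top"
      then have "nw (\<sigma> a b2) (R a b2) x = top" using dphi[OF that(1) b2(1)] by simp
      then have "x \<le> R a b2" by (rule at_nw_top[OF AT[OF that(1) b2(1)] UN[OF that(1) b2(1)]])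
      then show False using b2(2) that(2) by (simp add: bot_unique)
    qed
    then have n1: "down_map A B R \<sigma> nw (phi A a x) \<noteq> const_map B top"
      using b2(1) unfolding const_map_def by (metis restrict_apply')
    have "R a b1 \<le> down_map A B R \<sigma> nw (phi A a x) b1"
      unfolding dphi[OF that(1) b1(1)] by (rule at_nw_ge[OF AT[OF that(1) b1(1)] UN[OF that(1) b1(1)]])
    then have "down_map A B R \<sigma> nw (phi A a x) b1 \<noteq> bot" using b1(2) by (auto simp: bot_unique)
    then have n2: "down_map A B R \<sigma> nw (phi A a x) \<noteq> const_map B bot"
      using b1(1) unfolding const_map_def by (metis restrict_apply')
    show ?thesis using n1 n2 by auto
  qed
  have part4: "(down_map A B R \<sigma> nw (up_map A B R \<sigma> sw (phi B b y)),
             up_map A B R \<sigma> sw (phi B b y))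
            \<notin> {(const_map B top, const_map A bot), (const_map B bot, const_map A top)}"
    if "b \<in> B" "y \<noteq> bot" for b y
  proof -
    have nB: "(\<exists>a1\<in>A. R a1 b \<noteq> bot) \<and> (\<exists>a2\<in>A. R a2 b = bot)"
      using norm that(1) unfolding normalized_context_def by simp
    obtain a1 where a1: "a1 \<in> A" "R a1 b \<noteq> bot" using nB by auto
    obtain a2 where a2: "a2 \<in> A" "R a2 b = bot" using nB by auto
    have "up_map A B R \<sigma> sw (phi B b y) a2 \<noteq> top"
    proof
      assume "up_map A B R \<sigma> sw (phi B b y) a2 = top"
      then have "sw (\<sigma> a2 b) (R a2 b) y = top" using uphi[OF a2(1) that(1)] by simp
      then have "y \<le> R a2 b" by (rule at_sw_top[OF AT[OF a2(1) that(1)] UN[OF a2(1) that(1)]])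
      then show False using a2(2) that(2) by (simp add: bot_unique)
    qed
    then have n1: "up_map A B R \<sigma> sw (phi B b y) \<noteq> const_map A top"
      using a2(1) unfolding const_map_def by (metis restrict_apply')
    have "R a1 b \<le> up_map A B R \<sigma> sw (phi B b y) a1"
      unfolding uphi[OF a1(1) that(1)] by (rule at_sw_ge[OF AT[OF a1(1) that(1)] UN[OF a1(1) that(1)]])
    then have "up_map A B R \<sigma> sw (phi B b y) a1 \<noteq> bot" using a1(2) by (auto simp: bot_unique)
    then have n2: "up_map A B R \<sigma> sw (phi B b y) \<noteq> const_map A bot"
      using a1(1) unfolding const_map_def by (metis restrict_apply')
    show ?thesis using n1 n2 by auto
  qed
  show ?thesis using part1 part2 part3 part4 by blast
qed

end
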